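(* Let a project have countable state space $\mathbb{X}$, transition probabilities $p(i,j)$ such that for every $i$, $|\{j:p(i,j)>0\}|\le N$, bounded active rewards $R(i)$, discount factor $0<\beta\le1$, horizon $T$, and initial state $i_0$. Let $\mathbb{X}_s(i_0)$ be the (finite) set of states reachable from $i_0$ within $s$ transitions, and let $\mathbb{Y}_T^{\{0,1\}}(i_0)=\{(d,i):1\le d\le T,\ i\in\mathbb{X}_{T-d}(i_0)\}$. For $(d,i)$ with $1\le d\le T$ define $$\lambda^*(d,i)=\max_{1\le\tau\le d}\frac{\mathsf{E}_i^{\tau}\big[\sum_{t=0}^{\tau-1}\beta^tR(X(t))\big]}{\mathsf{E}_i^{\tau}\big[\sum_{t=0}^{\tau-1}\beta^t\big]}.$$ Consider the auxiliary project with state space $\mathbb{Y}_T^{\{0,1\}}(i_0)\cup\{(0,\Omega)\}$ in which, under the active action, $(d,i)$ with $d\ge2$ moves to $(d-1,j)$ with probability $p(i,j)$, $(1,i)$ moves to the absorbing state $(0,\Omega)$, and the active reward is $R^1(d,i)=R(i)$; and let $$G'(d,i)=\max_{1\le\tau\le d}\frac{\mathsf{E}_{(d,i)}^{\tau}\big[\sum_{t=0}^{\tau-1}\beta^tR^1(Y(t))\big]}{\mathsf{E}_{(d,i)}^{\tau}\big[\sum_{t=0}^{\tau-1}\beta^t\big]}$$ for $(d,i)\in\mathbb{Y}_T^{\{0,1\}}(i_0)$, $Y(t)$ being the auxiliary project's state engaged from $Y(0)=(d,i)$. Then $\lambda^*(d,i)=G'(d,i)$ for all $(d,i)\in\ma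thbb{Y}_T^{\{0,1\}}(i_0)$.
   Context: The state $X(t)$ evolves as a Markov chain with transition probabilities $p(i,j)$ each time the project is engaged; stopping times are with respect to the history of the process. Note that if $i\in\mathbb{X}_{T-d}(i_0)$, all states reachable within $d-1$ further transitions lie in $\mathbb{X}_{T-1}(i_0)$ with correspondingly smaller remaining times, so the auxiliary project is well defined. *)

theory Defs
  imports "HOL-Analysis.Analysis"
begin

text \<open>A stopping rule stp :: 'a list => bool looks at the history [X(0),...,X(t)] (t >= 1)
 and says whether to stop at time t; together with the forced stop at horizon d this
 gives a stopping time tau with 1 <= tau <= d adapted to the history.\<close>

definition succs :: "('a \<Rightarrow> 'a \<Rightarrow> real) \<Rightarrow> 'a \<Rightarrow> 'a set" where
  "succs p i = {j. 0 < p i j}"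

text \<open>stopped_val p f beta stp n h: expected value of sum_{t<tau} beta^t f(X(t)),
 counted from the current state last h (history h), with at most n remaining periods.\<close>
fun stopped_val :: "('a \<Rightarrow> 'a \<Rightarrow> real) \<Rightarrow> ('a \<Rightarrow> real) \<Rightarrow> real \<Rightarrow> ('a list \<Rightarrow> bool)
                     \<Rightarrow> nat \<Rightarrow> 'a list \<Rightarrow> real" where
  "stopped_val p f beta stp 0 h = 0"
| "stopped_val p f beta stp (Suc n) h =
     f (last h) + beta * (\<Sum>j\<in>succs p (last h).
        p (last h) j * (if stp (h @ [j]) then 0 else stopped_val p f beta stp n (h @ [j])))"

text \<open>Index: max over stopping times 1 <= tau <= d of the reward/time ratio
 (written as a supremum over all stopping rules; the value set is attained).\<close>
definition index_val :: "('a \<Rightarrow> 'a \<Rightarrow> real) \<Rightarrow> ('a \<Rightarrow> real) \<Rightarrow> real \<Rightarrow> nat \<Rightarrow> 'a \<Rightarrow> real" where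
  "index_val p R beta d i =
     (SUP stp. stopped_val p R beta stp d [i] / stopped_val p (\<lambda>_. 1) beta stp d [i])"

fun reach :: "('a \<Rightarrow> 'a \<Rightarrow> real) \<Rightarrow> nat \<Rightarrow> 'a \<Rightarrow> 'a set" where
  "reach p 0 i0 = {i0}"
| "reach p (Suc s) i0 = reach p s i0 \<union> {j. \<exists>i\<in>reach p s i0. 0 < p i j}"

definition Y_set :: "('a \<Rightarrow> 'a \<Rightarrow> real) \<Rightarrow> nat \<Rightarrow> 'a \<Rightarrow> (nat \<times> 'a) set" where
  "Y_set p T i0 = {(d, i). 1 \<le> d \<and> d \<le> T \<and> i \<in> reach p (T - d) i0}"

text \<open>Auxiliary project: states Some (d,i), and None standing for the absorbing (0,Omega).\<close>
fun aux_p :: "('a \<Rightarrow> 'a \<Rightarrow> real) \<Rightarrow> (nat \<times> 'a) option \<Rightarrow> (nat \<times> 'a) option \<Rightarrow> real" where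
  "aux_p p None y = (if y = None then 1 else 0)"
| "aux_p p (Some (d, i)) y =
     (if 2 \<le> d then (case y of None \<Rightarrow> 0 | Some (d', j) \<Rightarrow> if d' = d - 1 then p i j else 0)
      else (if y = None then 1 else 0))"

fun aux_R :: "('a \<Rightarrow> real) \<Rightarrow> (nat \<times> 'a) option \<Rightarrow> real" where
  "aux_R R None = 0"
| "aux_R R (Some (d, i)) = R i"

end

theory Submission
  imports Defs
begin

definition lift :: "nat \<Rightarrow> 'a list \<Rightarrow> (nat \<times> 'a) option list" where
  "lift d h = map (\<lambda>k. Some (d - k, h ! k)) [0..<length h]"

lemma lift_snoc: "lift d (h @ [j]) = lift d h @ [Some (d - length h, j)]"
  by (simp add: lift_def nth_append)

lemma lift_last: "h \<noteq> [] \<Longrightarrow> last (lift d h) = Some (d - (length h - 1), last h)"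
  by (simp add: lift_def last_map last_conv_nth)

lemma lift_ne: "h \<noteq> [] \<Longrightarrow> lift d h \<noteq> []"
  by (simp add: lift_def)

lemma succs_aux: "2 \<le> m \<Longrightarrow> succs (aux_p p) (Some (m, i)) = (\<lambda>j. Some (m - 1, j)) ` succs p i"
  by (auto simp: succs_def split: option.splits if_splits)

lemma sv1: "stopped_val p f beta stp (Suc 0) h = f (last h)"
  by (simp cong: if_cong)

lemma key:
  assumes H: "\<And>g. stp' (lift d g) = stp g"
    and F: "\<And>m i. f' (Some (m, i)) = f i"
  shows "n + length h = d + 1 \<Longrightarrow> h \<noteq> [] \<Longrightarrow>
    stopped_val (aux_p p) f' beta stp' n (lift d h) = stopped_val p f beta stp n h"
proof (induction n arbitrary: h)
  case 0
  then show ?case by simp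
next
  case (Suc n)
  have L: "last (lift d h) = Some (Suc n, last h)"
  proof -
    have "d - (length h - 1) = Suc n" using Suc.prems by (cases h) auto
    then show ?thesis using Suc.prems by (simp add: lift_last)
  qed
  show ?case
  proof (cases "n = 0")
    case True
    then show ?thesis using L F by (simp only: sv1)
  next
    case False
    have S: "succs (aux_p p) (Some (Suc n, last h)) = (\<lambda>j. Some (n, j)) ` succs p (last h)"
      using False succs_aux[of "Suc n" p "last h"] by simp
    have inj: "inj_on (\<lambda>j. Some (n, j)) (succs p (last h))" by (auto simp: inj_on_def)
    have eq: "aux_p p (Some (Suc n, last h)) (Some (n, j)) *
        (if stp' (lift d h @ [Some (n, j)]) then 0
         else stopped_val (aux_p p) f' beta stp' n (lift d h @ [Some (n, j)]))
      = p (last h) j * (if stp (h @ [j]) then 0 else stopped_val p f beta stp n (h @ [j]))" for j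
    proof -
      have dl: "d - length h = n" using Suc.prems by simp
      have "lift d h @ [Some (n, j)] = lift d (h @ [j])" by (simp add: lift_snoc dl)
      moreover have "stopped_val (aux_p p) f' beta stp' n (lift d (h @ [j]))
          = stopped_val p f beta stp n (h @ [j])"
        using Suc.IH[of "h @ [j]"] Suc.prems by simp
      moreover have "aux_p p (Some (Suc n, last h)) (Some (n, j)) = p (last h) j"
        using False by simp
      ultimately show ?thesis using H by simp
    qed
    show ?thesis
      apply (simp only: stopped_val.simps L S F)
      apply (subst sum.reindex[OF inj])
      apply (simp only: o_def eq)
      done
  qed
qed

lemma proj_lift: "map (\<lambda>x. snd (the x)) (lift d g) = g"
  by (rule nth_equalityI) (auto simp: lift_def)

lemma main_eq:
  fixes p :: "'a \<Rightarrow> 'a \<Rightarrow> real" and R :: "'a \<Rightarrow> real" and d :: nat and i :: 'a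
  shows "index_val p R beta d i = index_val (aux_p p) (aux_R R) beta d (Some (d, i))"
proof -
  have L0: "lift d [i] = [Some (d, i)]" by (simp add: lift_def)
  have K: "stopped_val (aux_p p) (aux_R R) beta stp' d [Some (d, i)] = stopped_val p R beta stp d [i]
     \<and> stopped_val (aux_p p) (\<lambda>_. 1) beta stp' d [Some (d, i)] = stopped_val p (\<lambda>_. 1) beta stp d [i]"
    if H: "\<And>g. stp' (lift d g) = stp g" for stp stp'
    using key[of stp' d stp "aux_R R" R d "[i]" p beta, OF H] key[of stp' d stp "\<lambda>_. 1" "\<lambda>_. 1" d "[i]" p beta, OF H]
    by (simp add: L0)
  let ?F = "\<lambda>stp. stopped_val p R beta stp d [i] / stopped_val p (\<lambda>_. 1) beta stp d [i]"
  let ?G = "\<lambda>stp'. stopped_val (aux_p p) (aux_R R) beta stp' d [Some (d, i)] /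
              stopped_val (aux_p p) (\<lambda>_. 1) beta stp' d [Some (d, i)]"
  have "range ?F = range ?G"
  proof
    show "range ?F \<subseteq> range ?G"
    proof clarify
      fix stp :: "'a list \<Rightarrow> bool"
      let ?s = "\<lambda>g::(nat \<times> 'a) option list. stp (map (\<lambda>x. snd (the x)) g)"
      have "?F stp = ?G ?s" using K[of ?s stp] by (simp add: proj_lift)
      then show "?F stp \<in> range ?G" by blast
    qed
  next
    show "range ?G \<subseteq> range ?F"
    proof (rule subsetI, erule rangeE)
      fix x stp'

      assume x: "x = ?G stp'"
      have "?G stp' = ?F (\<lambda>g. stp' (lift d g))" using K[of stp' "\<lambda>g. stp' (lift d g)"] by simp
      then show "x \<in> range ?F" using x by blast
    qed
  qed
  then show "index_val p R beta d i = index_val (aux_p p) (aux_R R) beta d (Some (d, i))"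
    by (simp add: index_val_def)
qed


theorem proposition6:
  fixes p :: "'a::countable \<Rightarrow> 'a \<Rightarrow> real" and R :: "'a \<Rightarrow> real"
    and beta :: real and N T :: nat and i0 :: 'a
  assumes p_nonneg: "\<And>i j. 0 \<le> p i j"
    and p_fin: "\<And>i. finite {j. 0 < p i j} \<and> card {j. 0 < p i j} \<le> N"
    and p_stoch: "\<And>i. (\<Sum>j\<in>{j. 0 < p i j}. p i j) = 1"
    and R_bdd: "\<exists>B. \<forall>i. \<bar>R i\<bar> \<le> B"
    and beta: "0 < beta" "beta \<le> 1"
  shows "\<forall>(d, i) \<in> Y_set p T i0.
           index_val p R beta d i = index_val (aux_p p) (aux_R R) beta d (Some (d, i))"
  using main_eq by auto

end
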